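(* Let $\mathcal{X}\in\mathbb{K}_l^{m\times n}$ and $\mathcal{Y}\in\mathbb{K}_l^{n\times p}$ be fixed tubal matrices, let $\tau\ge 1$, and let $\mathcal{S}\in\mathbb{K}_l^{n\times\tau}$, $\mathcal{D}\in\mathbb{K}_l^{\tau\times\tau}$ be the random sampling and rescaling tubal matrices generated from a probability distribution $\{\pi_i\}_{i=1}^n$ (with $\pi_i>0$) as described in the context. Suppose that for some $\beta\in(0,1]$ either $$\pi_i\ \ge\ \beta\,\frac{\|\mathcal{X}_{(:,i,:)}\|_F\,\|\mathcal{Y}_{(i,:,:)}\|_F}{\sum_{j=1}^n\|\mathcal{X}_{(:,j,:)}\|_F\,\|\mathcal{Y}_{(j,:,:)}\|_F}\quad\text{for all } i\in[n],$$ or $$\pi_i\ \ge\ \beta\,\frac{\|\mathcal{X}_{(:,i,:)}\|_F^2}{\|\mathcal{X}\|_F^2}\quad\text{for all } i\in[n].$$ Then $$\mathbf{E}\big[\|\mathcal{X}*\mathcal{Y}-\mathcal{X}*\mathcal{S}*\mathcal{D}*\mathcal{D}*\mathcal{S}^{T}*\mathcal{Y}\|_F^2\big]\ \le\ \frac{l}{\beta\tau}\,\|\mathcal{X}\|_F^2\,\|\mathcal{Y}\|_F^2 .$$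
   Context: $\mathbb{K}_l^{n\times p}$ denotes $\mathbb{R}^{n\times p\times l}$ (third-order tensors, called tubal matrices); $\mathcal{X}_{(k)}=\mathcal{X}_{(:,:,k)}$ is the $k$-th frontal slice, and Matlab-style indexing is used for fibers and slices (e.g. $\mathcal{X}_{(:,i,:)}$ is the $i$-th lateral slice, $\mathcal{Y}_{(i,:,:)}$ the $i$-th horizontal slice). The t-product of $\mathcal{A}\in\mathbb{K}_l^{n\times p}$ and $\mathcal{B}\in\mathbb{K}_l^{p\times r}$ is $\mathcal{A}*\mathcal{B}=\mathrm{fold}(\mathrm{bcirc}(\mathcal{A})\,\mathrm{unfold}(\mathcal{B}))\in\mathbb{K}_l^{n\times r}$, where $\mathrm{bcirc}(\mathcal{A})$ is the $nl\times pl$ block-circulant matrix whose first block column is $(\mathcal{A}_{(1)};\mathcal{A}_{(2)};\dots;\mathcal{A}_{(l)})$ (block $(i,j)$ equals $\mathcal{A}_{((i-j \bmod l)+1)}$), $\mathrm{unfold}(\mathcal{B})=(\mathcal{B}_{(1)};\dots;\mathcal{B}_{(l)})$ stacked vertically, and $\mathrm{fold}$ inverts $\mathrm{unfold}$. The transpose $\mathcal{A}^T\in\mathbb{K}_l^{p\times n}$ has $(\mathcal{A}^T)_{(1)}=\mathcal{A}_{(1)}^T$ and $(\mathcal{A}^T)_{(k)}=\mathcal{A}_{(l-k+2)}^T$ for $k=2,\dots,l$. $\|\cdot\|_F$ is the square root of the sum of squares of all entries. Sampling construction: given a probability distribution $\{\pi_i\}_{i=1}^n$ on $[n]=\{1,\dots,n\}$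 and an integer $\tau$, draw indices $i_1,\dots,i_\tau\in[n]$ independently with $\mathbf{P}(i_t=i)=\pi_i$ (sampling with replacement); $\mathcal{S}\in\mathbb{K}_l^{n\times\tau}$ has $\mathcal{S}_{(i_t,t,1)}=1$ for $t=1,\dots,\tau$ and all other entries zero; $\mathcal{D}\in\mathbb{K}_l^{\tau\times\tau}$ has $\mathcal{D}_{(t,t,1)}=1/\sqrt{\tau\pi_{i_t}}$ for $t=1,\dots,\tau$ and all other entries zero. *)

theory Defs
  imports Complex_Main "HOL-Library.FuncSet"
begin

text \<open>Tubal matrices in K_l^{a x b} are represented as functions
  nat => nat => nat => real, with 0-based indices (row, column, frontal slice);
  only entries with row < a, column < b, slice < l are meaningful.\<close>

type_synonym tensor = "nat \<Rightarrow> nat \<Rightarrow> nat \<Rightarrow> real"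

text \<open>t-product of A (a x q x l) and B (q x r x l): the k-th frontal slice of
  fold(bcirc(A) unfold(B)) is sum over s of A_((k-s) mod l) B_s.\<close>
definition tprod :: "nat \<Rightarrow> nat \<Rightarrow> tensor \<Rightarrow> tensor \<Rightarrow> tensor" where
  "tprod l q A B = (\<lambda>i j k. \<Sum>c<q. \<Sum>s<l. A i c ((k + l - s) mod l) * B c j s)"

text \<open>t-transpose: slice 1 transposed, slices 2..l transposed and reversed.\<close>
definition ttrans :: "nat \<Rightarrow> tensor \<Rightarrow> tensor" where
  "ttrans l A = (\<lambda>i j k. A j i ((l - k) mod l))"

definition fro_sq :: "nat \<Rightarrow> nat \<Rightarrow> nat \<Rightarrow> tensor \<Rightarrow> real" where
  "fro_sq a b l A = (\<Sum>i<a. \<Sum>j<b. \<Sum>k<l. (A i j k)^2)"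

definition fro :: "nat \<Rightarrow> nat \<Rightarrow> nat \<Rightarrow> tensor \<Rightarrow> real" where
  "fro a b l A = sqrt (fro_sq a b l A)"

text \<open>lateral slice X(:,i,:) of an a x b x l tensor (a x 1 x l) and
  horizontal slice Y(i,:,:) (1 x b x l).\<close>
definition lat_slice :: "tensor \<Rightarrow> nat \<Rightarrow> tensor" where
  "lat_slice X i = (\<lambda>r c k. X r i k)"

definition hor_slice :: "tensor \<Rightarrow> nat \<Rightarrow> tensor" where
  "hor_slice Y i = (\<lambda>r c k. Y i c k)"

text \<open>Sampling tensor S (n x tau x l) for index sequence idx : {0..<tau} -> {0..<n}.\<close>
definition samp_S :: "(nat \<Rightarrow> nat) \<Rightarrow> tensor" where
  "samp_S idx = (\<lambda>i t k. if k = 0 \<and> i = idx t then 1 else 0)"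

definition samp_D :: "nat \<Rightarrow> (nat \<Rightarrow> real) \<Rightarrow> (nat \<Rightarrow> nat) \<Rightarrow> tensor" where
  "samp_D \<tau> \<pi> idx = (\<lambda>t t' k. if k = 0 \<and> t = t' then 1 / sqrt (real \<tau> * \<pi> (idx t)) else 0)"

text \<open>Expectation over tau i.i.d. draws (with replacement) from distribution pi on {0..<n}.\<close>
definition samp_expect :: "nat \<Rightarrow> nat \<Rightarrow> (nat \<Rightarrow> real) \<Rightarrow> ((nat \<Rightarrow> nat) \<Rightarrow> real) \<Rightarrow> real" where
  "samp_expect n \<tau> \<pi> f =
     (\<Sum>idx \<in> PiE {..<\<tau>} (\<lambda>_. {..<n}). (\<Prod>t<\<tau>. \<pi> (idx t)) * f idx)"

end

theory Submission
  imports Defs "HOL-Analysis.Convex"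
begin


lemma T1:
  assumes "k < l" "idx t < n"
  shows "tprod l n X (samp_S idx) i t k = X i (idx t) k"
proof -
  have "tprod l n X (samp_S idx) i t k = (\<Sum>c<n. (if c = idx t then X i c k else 0))"
    unfolding tprod_def samp_S_def
  proof (rule sum.cong[OF refl])
    fix c assume "c \<in> {..<n}"
    have "(\<Sum>s<l. X i c ((k + l - s) mod l) * (if s = 0 \<and> c = idx t then 1 else 0))
        = (\<Sum>s<l. if s = 0 then (if c = idx t then X i c ((k + l - s) mod l) else 0) else 0)"
      by (rule sum.cong) auto
    also have "\<dots> = (if c = idx t then X i c k else 0)" using assms by simp
    finally show "(\<Sum>s<l. X i c ((k + l - s) mod l) * (if s = 0 \<and> c = idx t then 1 else 0)) = (if c = idx t then X i c k else 0)" .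
  qed
  also have "\<dots> = X i (idx t) k" using assms by simp
  finally show ?thesis .
qed

lemma TD:
  assumes "k < l" "t < \<tau>"
  shows "tprod l \<tau> Z (samp_D \<tau> \<pi> idx) i t k = Z i t k * (1 / sqrt (real \<tau> * \<pi> (idx t)))"
proof -
  have "tprod l \<tau> Z (samp_D \<tau> \<pi> idx) i t k = (\<Sum>c<\<tau>. (if c = t then Z i c k * (1 / sqrt (real \<tau> * \<pi> (idx c))) else 0))"
    unfolding tprod_def samp_D_def
  proof (rule sum.cong[OF refl])
    fix c assume "c \<in> {..<\<tau>}"
    have "(\<Sum>s<l. Z i c ((k + l - s) mod l) * (if s = 0 \<and> c = t then 1 / sqrt (real \<tau> * \<pi> (idx c)) else 0))
        = (\<Sum>s<l. if s = 0 then (if c = t then Z i c ((k + l - s) mod l) * (1 / sqrt (real \<tau> * \<pi> (idx c))) else 0) else 0)"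
      by (rule sum.cong) auto
    also have "\<dots> = (if c = t then Z i c k * (1 / sqrt (real \<tau> * \<pi> (idx c))) else 0)" using assms by simp
    finally show "(\<Sum>s<l. Z i c ((k + l - s) mod l) * (if s = 0 \<and> c = t then 1 / sqrt (real \<tau> * \<pi> (idx c)) else 0)) = (if c = t then Z i c k * (1 / sqrt (real \<tau> * \<pi> (idx c))) else 0)" .
  qed
  also have "\<dots> = Z i t k * (1 / sqrt (real \<tau> * \<pi> (idx t)))" using assms by simp
  finally show ?thesis .
qed

lemma TST:
  assumes "k < l"
  shows "tprod l \<tau> Z (ttrans l (samp_S idx)) i j k = (\<Sum>c<\<tau>. if j = idx c then Z i c k else 0)"
  unfolding tprod_def samp_S_def ttrans_def
proof (rule sum.cong[OF refl])
  fix c assume "c \<in> {..<\<tau>}"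
  have "(\<Sum>s<l. Z i c ((k + l - s) mod l) * (if (l - s) mod l = 0 \<and> j = idx c then 1 else 0))
      = (\<Sum>s<l. if s = 0 then (if j = idx c then Z i c ((k + l - s) mod l) else 0) else 0)"
  proof (rule sum.cong[OF refl])
    fix s assume "s \<in> {..<l}"
    then have "(l - s) mod l = 0 \<longleftrightarrow> s = 0" by (cases "s = 0") (auto dest: dvd_imp_le)
    then show "Z i c ((k + l - s) mod l) * (if (l - s) mod l = 0 \<and> j = idx c then 1 else 0) = (if s = 0 then (if j = idx c then Z i c ((k + l - s) mod l) else 0) else 0)"
      by auto
  qed
  also have "\<dots> = (if j = idx c then Z i c k else 0)" using assms by simp
  finally show "(\<Sum>s<l. Z i c ((k + l - s) mod l) * (if (l - s) mod l = 0 \<and> j = idx c then 1 else 0)) = (if j = idx c then Z i c k else 0)" .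
qed


lemma big_eq:
  assumes k: "k < l" and idx: "\<forall>t<\<tau>. idx t < n" and pos: "\<forall>i<n. \<pi> i > 0"
  shows "tprod l n
           (tprod l \<tau>
              (tprod l \<tau> (tprod l \<tau> (tprod l n X (samp_S idx)) (samp_D \<tau> \<pi> idx))
                 (samp_D \<tau> \<pi> idx))
              (ttrans l (samp_S idx)))
           Y i c k
       = (\<Sum>t<\<tau>. (\<Sum>s<l. X i (idx t) ((k + l - s) mod l) * Y (idx t) c s) / (real \<tau> * \<pi> (idx t)))"
proof -
  let ?w = "\<lambda>j. 1 / (real \<tau> * \<pi> j)"
  define T4 where "T4 = tprod l \<tau>
              (tprod l \<tau> (tprod l \<tau> (tprod l n X (samp_S idx)) (samp_D \<tau> \<pi> idx))
                 (samp_D \<tau> \<pi> idx))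
              (ttrans l (samp_S idx))"
  have l0: "l > 0" using k by simp
  have T3: "tprod l \<tau> (tprod l \<tau> (tprod l n X (samp_S idx)) (samp_D \<tau> \<pi> idx))
                 (samp_D \<tau> \<pi> idx) i t k' = X i (idx t) k' * ?w (idx t)"
    if "k' < l" "t < \<tau>" for k' t
  proof -
    have p: "\<pi> (idx t) > 0" using idx pos that by auto
    show ?thesis using that idx p
      by (simp add: TD T1 real_sqrt_mult[symmetric])
  qed
  have T4: "T4 i j k' = (if j < n then (\<Sum>t<\<tau>. if j = idx t then X i j k' * ?w j else 0) else 0)"
    if "k' < l" "j < n" for k' j
    unfolding T4_def using that by (simp add: TST T3 cong: if_cong)
  have "tprod l n T4 Y i c k = (\<Sum>j<n. \<Sum>s<l. (\<Sum>t<\<tau>. if j = idx t then X i j ((k + l - s) mod l) * ?w j else 0) * Y j c s)"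
    unfolding tprod_def
    by (intro sum.cong refl) (simp add: T4 l0)
  also have "\<dots> = (\<Sum>j<n. \<Sum>t<\<tau>. \<Sum>s<l. if j = idx t then X i j ((k + l - s) mod l) * ?w j * Y j c s else 0)"
  proof (rule sum.cong[OF refl])
    fix j assume "j \<in> {..<n}"
    have "(\<Sum>s<l. (\<Sum>t<\<tau>. if j = idx t then X i j ((k + l - s) mod l) * ?w j else 0) * Y j c s)
      = (\<Sum>s<l. \<Sum>t<\<tau>. if j = idx t then X i j ((k + l - s) mod l) * ?w j * Y j c s else 0)"
      by (auto simp: sum_distrib_right intro!: sum.cong)
    also have "\<dots> = (\<Sum>t<\<tau>. \<Sum>s<l. if j = idx t then X i j ((k + l - s) mod l) * ?w j * Y j c s else 0)"
      by (rule sum.swap)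
    finally show "(\<Sum>s<l. (\<Sum>t<\<tau>. if j = idx t then X i j ((k + l - s) mod l) * ?w j else 0) * Y j c s)
      = (\<Sum>t<\<tau>. \<Sum>s<l. if j = idx t then X i j ((k + l - s) mod l) * ?w j * Y j c s else 0)" .
  qed
  also have "\<dots> = (\<Sum>t<\<tau>. \<Sum>j<n. if j = idx t then (\<Sum>s<l. X i j ((k + l - s) mod l) * ?w j * Y j c s) else 0)"
    by (subst sum.swap) (simp add: if_distrib sum.If_cases)
  also have "\<dots> = (\<Sum>t<\<tau>. (\<Sum>s<l. X i (idx t) ((k + l - s) mod l) * Y (idx t) c s) / (real \<tau> * \<pi> (idx t)))"
    using idx by (intro sum.cong refl) (simp add: sum_divide_distrib)
  finally show ?thesis unfolding T4_def .
qed



lemma exp_prod: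
  "samp_expect n \<tau> \<pi> (\<lambda>idx. \<Prod>t<\<tau>. h t (idx t)) = (\<Prod>t<\<tau>. \<Sum>j<n. \<pi> j * h t j)"
  unfolding samp_expect_def
  by (subst prod_sum_PiE) (auto simp: prod.distrib)

lemma exp_sum:
  assumes "finite S"
  shows "samp_expect n \<tau> \<pi> (\<lambda>idx. \<Sum>x\<in>S. f x idx) = (\<Sum>x\<in>S. samp_expect n \<tau> \<pi> (f x))"
  unfolding samp_expect_def
  by (simp add: sum_distrib_left) (rule sum.swap)

lemma exp_cmult:
  "samp_expect n \<tau> \<pi> (\<lambda>idx. c * f idx) = c * samp_expect n \<tau> \<pi> f"
  unfolding samp_expect_def
  by (simp add: sum_distrib_left mult_ac)

lemma exp_one:
  assumes "t < \<tau>" "(\<Sum>i<n. \<pi> i) = 1"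
  shows "samp_expect n \<tau> \<pi> (\<lambda>idx. f (idx t)) = (\<Sum>j<n. \<pi> j * f j)"
proof -
  have "samp_expect n \<tau> \<pi> (\<lambda>idx. f (idx t))
      = samp_expect n \<tau> \<pi> (\<lambda>idx. \<Prod>s<\<tau>. (\<lambda>s x. if s = t then f x else 1) s (idx s))"
    using assms by simp
  also have "\<dots> = (\<Prod>s<\<tau>. \<Sum>j<n. \<pi> j * (if s = t then f j else 1))"
    by (rule exp_prod)
  also have "\<dots> = (\<Prod>s<\<tau>. if s = t then (\<Sum>j<n. \<pi> j * f j) else 1)"
    using assms by (intro prod.cong) auto
  also have "\<dots> = (\<Sum>j<n. \<pi> j * f j)" using assms by simp
  finally show ?thesis .
qed

lemma exp_two:
  assumes "t < \<tau>" "t' < \<tau>" "t \<noteq> t'" "(\<Sum>i<n. \<pi> i) = 1"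
  shows "samp_expect n \<tau> \<pi> (\<lambda>idx. f (idx t) * g (idx t')) = (\<Sum>j<n. \<pi> j * f j) * (\<Sum>j<n. \<pi> j * g j)"
proof -
  have "samp_expect n \<tau> \<pi> (\<lambda>idx. f (idx t) * g (idx t'))
      = samp_expect n \<tau> \<pi> (\<lambda>idx. \<Prod>s<\<tau>. (\<lambda>s x. (if s = t then f x else 1) * (if s = t' then g x else 1)) s (idx s))"
    using assms by (simp add: prod.distrib)
  also have "\<dots> = (\<Prod>s<\<tau>. \<Sum>j<n. \<pi> j * ((if s = t then f j else 1) * (if s = t' then g j else 1)))"
    by (rule exp_prod)
  also have "\<dots> = (\<Prod>s<\<tau>. (if s = t then (\<Sum>j<n. \<pi> j * f j) else 1) * (if s = t' then (\<Sum>j<n. \<pi> j * g j) else 1))"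
    using assms by (intro prod.cong) auto
  also have "\<dots> = (\<Sum>j<n. \<pi> j * f j) * (\<Sum>j<n. \<pi> j * g j)" using assms by (simp add: prod.distrib)
  finally show ?thesis .
qed



lemma inj_refl0:
  fixes k l s s' :: nat
  assumes "k < l" "s \<le> s'" "s' < l" "(k + l - s) mod l = (k + l - s') mod l"
  shows "s = s'"
proof -
  have "l dvd (k + l - s) - (k + l - s')"
    using mod_eq_dvd_iff_nat[where m="k+l-s" and n="k+l-s'" and q=l] assms by auto
  moreover have "(k + l - s) - (k + l - s') = s' - s" using assms by auto
  ultimately have "l dvd s' - s" by simp
  moreover have "s' - s < l" using assms by auto
  ultimately have "s' - s = 0" by (metis dvd_imp_le le_antisym less_imp_le_nat not_le not_gr0)
  then show ?thesis using assms by auto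
qed

lemma prod_sums:
  fixes a b :: "nat \<Rightarrow> real"
  shows "(\<Sum>i<m. \<Sum>c<p. L * (a i * b c)) = L * ((\<Sum>i<m. a i) * (\<Sum>c<p. b c))"
proof -
  have "(\<Sum>i<m. \<Sum>c<p. L * (a i * b c)) = L * (\<Sum>i<m. \<Sum>c<p. a i * b c)"
    by (simp add: sum_distrib_left)
  also have "(\<Sum>i<m. \<Sum>c<p. a i * b c) = (\<Sum>i<m. a i) * (\<Sum>c<p. b c)"
    by (rule sum_product[symmetric])
  finally show ?thesis .
qed

lemma reidx:
  fixes k l :: nat
  assumes "k < l"
  shows "(\<Sum>s<l. g ((k + l - s) mod l)) = (\<Sum>s<l. (g s :: real))"
proof -
  have inj: "inj_on (\<lambda>s. (k + l - s) mod l) {..<l}"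
  proof (rule inj_onI)
    fix s s' assume a: "s \<in> {..<l}" "s' \<in> {..<l}" and e: "(k + l - s) mod l = (k + l - s') mod l"
    show "s = s'"
    proof (cases "s \<le> s'")
      case True then show ?thesis using inj_refl0[of k l s s'] assms a e by auto
    next
      case False then show ?thesis using inj_refl0[of k l s' s] assms a e[symmetric] by auto
    qed
  qed
  have img: "(\<lambda>s. (k + l - s) mod l) ` {..<l} = {..<l}"
    using assms inj by (intro endo_inj_surj) auto
  have "(\<Sum>s<l. g ((k + l - s) mod l)) = (\<Sum>s\<in>(\<lambda>s. (k + l - s) mod l) ` {..<l}. g s)"
    using inj by (simp add: sum.reindex)
  also have "\<dots> = (\<Sum>s<l. g s)" using img by simp
  finally show ?thesis .
qed

lemma normA:
  shows "fro_sq m p l (\<lambda>i c k. \<Sum>s<l. X i j ((k + l - s) mod l) * Y j c s)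
     \<le> real l * fro_sq m 1 l (lat_slice X j) * fro_sq 1 p l (hor_slice Y j)"
proof -
  have pt: "(\<Sum>s<l. X i j ((k + l - s) mod l) * Y j c s)^2 \<le> (\<Sum>s<l. (X i j s)^2) * (\<Sum>s<l. (Y j c s)^2)"
    if "k < l" for i c k
  proof -
    have "(\<Sum>s<l. X i j ((k + l - s) mod l) * Y j c s)^2 \<le> (\<Sum>s<l. (X i j ((k + l - s) mod l))^2) * (\<Sum>s<l. (Y j c s)^2)"
      by (rule Cauchy_Schwarz_ineq_sum)
    also have "(\<Sum>s<l. (X i j ((k + l - s) mod l))^2) = (\<Sum>s<l. (X i j s)^2)"
      using reidx[OF that, of "\<lambda>s. (X i j s)^2"] by simp
    finally show ?thesis .
  qed
  have "fro_sq m p l (\<lambda>i c k. \<Sum>s<l. X i j ((k + l - s) mod l) * Y j c s)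
      \<le> (\<Sum>i<m. \<Sum>c<p. \<Sum>k<l. (\<Sum>s<l. (X i j s)^2) * (\<Sum>s<l. (Y j c s)^2))"
    unfolding fro_sq_def by (intro sum_mono pt) auto
  also have "\<dots> = (\<Sum>i<m. \<Sum>c<p. real l * ((\<Sum>s<l. (X i j s)^2) * (\<Sum>s<l. (Y j c s)^2)))"
    by simp
  also have "\<dots> = real l * ((\<Sum>i<m. \<Sum>s<l. (X i j s)^2) * (\<Sum>c<p. \<Sum>s<l. (Y j c s)^2))"
    by (rule prod_sums)
  also have "\<dots> = real l * (\<Sum>i<m. \<Sum>s<l. (X i j s)^2) * (\<Sum>c<p. \<Sum>s<l. (Y j c s)^2)"
    by simp
  also have "\<dots> = real l * fro_sq m 1 l (lat_slice X j) * fro_sq 1 p l (hor_slice Y j)"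
    by (simp add: fro_sq_def lat_slice_def hor_slice_def)
  finally show ?thesis .
qed



lemma bound_case2:
  fixes a b \<pi> :: "nat \<Rightarrow> real"
  assumes a: "\<forall>j<n. a j \<ge> 0" and b: "\<forall>j<n. b j \<ge> 0" and pos: "\<forall>j<n. \<pi> j > 0" and beta: "\<beta> > 0"
    and c: "\<forall>i<n. \<pi> i \<ge> \<beta> * a i / (\<Sum>j<n. a j)"
  shows "(\<Sum>j<n. a j * b j / \<pi> j) \<le> (\<Sum>j<n. a j) * (\<Sum>j<n. b j) / \<beta>"
proof (cases "(\<Sum>j<n. a j) = 0")
  case True
  then have "\<forall>j<n. a j = 0" using a sum_nonneg_eq_0_iff[of "{..<n}" a] by auto
  then show ?thesis using True by simp
next
  case False
  define S where "S = (\<Sum>j<n. a j)"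
  have S: "S > 0" using False a unfolding S_def by (metis order_le_less sum_nonneg lessThan_iff)
  have "(\<Sum>j<n. a j * b j / \<pi> j) \<le> (\<Sum>j<n. S * b j / \<beta>)"
  proof (rule sum_mono)
    fix j assume j: "j \<in> {..<n}"
    have pj: "\<pi> j > 0" using pos j by auto
    have "\<beta> * a j / S \<le> \<pi> j" using c j unfolding S_def by auto
    then have "\<beta> * a j \<le> \<pi> j * S" using S by (simp add: divide_le_eq mult.commute)
    then have "a j / \<pi> j \<le> S / \<beta>" using pj beta by (simp add: divide_le_eq le_divide_eq mult_ac)
    then have "a j / \<pi> j * b j \<le> S / \<beta> * b j" using b j by (intro mult_right_mono) auto
    then show "a j * b j / \<pi> j \<le> S * b j / \<beta>" by (simp add: mult_ac)
  qed
  also have "\<dots> = S * (\<Sum>j<n. b j) / \<beta>" by (simp add: sum_divide_distrib[symmetric] sum_distrib_left)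
  finally show ?thesis unfolding S_def .
qed

lemma bound_case1:
  fixes a b \<pi> :: "nat \<Rightarrow> real"
  assumes a: "\<forall>j<n. a j \<ge> 0" and b: "\<forall>j<n. b j \<ge> 0" and pos: "\<forall>j<n. \<pi> j > 0" and beta: "\<beta> > 0"
    and c: "\<forall>i<n. \<pi> i \<ge> \<beta> * (sqrt (a i) * sqrt (b i)) / (\<Sum>j<n. sqrt (a j) * sqrt (b j))"
  shows "(\<Sum>j<n. a j * b j / \<pi> j) \<le> (\<Sum>j<n. a j) * (\<Sum>j<n. b j) / \<beta>"
proof -
  define f where "f j = sqrt (a j) * sqrt (b j)" for j
  define T where "T = (\<Sum>j<n. f j)"
  have f0: "\<forall>j<n. f j \<ge> 0" using a b unfolding f_def by auto
  have ab: "a j * b j = (f j)^2" if "j < n" for j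
    using a b that unfolding f_def by (simp add: power_mult_distrib)
  have CS: "T^2 \<le> (\<Sum>j<n. a j) * (\<Sum>j<n. b j)"
  proof -
    have "T^2 \<le> (\<Sum>j<n. (sqrt (a j))^2) * (\<Sum>j<n. (sqrt (b j))^2)"
      unfolding T_def f_def by (rule Cauchy_Schwarz_ineq_sum)
    also have "\<dots> = (\<Sum>j<n. a j) * (\<Sum>j<n. b j)" using a b by simp
    finally show ?thesis .
  qed
  have lhs: "(\<Sum>j<n. a j * b j / \<pi> j) \<le> T^2 / \<beta>"
  proof (cases "T = 0")
    case True
    then have "\<forall>j<n. f j = 0" using f0 sum_nonneg_eq_0_iff[of "{..<n}" f] unfolding T_def by auto
    then have "(\<Sum>j<n. a j * b j / \<pi> j) = 0" using ab by (intro sum.neutral) auto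
    then show ?thesis using True by simp
  next
    case False
    have T: "T > 0" using False f0 unfolding T_def by (metis order_le_less sum_nonneg lessThan_iff)
    have "(\<Sum>j<n. a j * b j / \<pi> j) \<le> (\<Sum>j<n. f j * T / \<beta>)"
    proof (rule sum_mono)
      fix j assume j: "j \<in> {..<n}"
      have pj: "\<pi> j > 0" using pos j by auto
      have "\<beta> * f j / T \<le> \<pi> j" using c j unfolding T_def f_def by auto
      then have "\<beta> * f j \<le> \<pi> j * T" using T by (simp add: divide_le_eq mult.commute)
      then have "f j / \<pi> j \<le> T / \<beta>" using pj beta by (simp add: divide_le_eq le_divide_eq mult_ac)
      then have "f j / \<pi> j * f j \<le> T / \<beta> * f j" using f0 j by (intro mult_right_mono) auto
      then show "a j * b j / \<pi> j \<le> f j * T / \<beta>" using ab j by (simp add: power2_eq_square mult_ac)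
    qed
    also have "\<dots> = T^2 / \<beta>" unfolding T_def
      by (simp add: sum_divide_distrib[symmetric] sum_distrib_right[symmetric] power2_eq_square)
    finally show ?thesis .
  qed
  also have "\<dots> \<le> (\<Sum>j<n. a j) * (\<Sum>j<n. b j) / \<beta>" using CS beta by (simp add: divide_right_mono)
  finally show ?thesis .
qed



lemma fro_lat: "fro_sq m n l X = (\<Sum>j<n. fro_sq m 1 l (lat_slice X j))"
  unfolding fro_sq_def lat_slice_def by (simp, rule sum.swap)

lemma fro_hor: "fro_sq n p l Y = (\<Sum>j<n. fro_sq 1 p l (hor_slice Y j))"
  unfolding fro_sq_def hor_slice_def by simp

lemma avg_id:
  fixes a q :: "nat \<Rightarrow> real" and \<tau> :: nat
  assumes "\<tau> \<ge> 1"
  shows "B - (\<Sum>t<\<tau>. a t / (real \<tau> * q t)) = 1 / real \<tau> * (\<Sum>t<\<tau>. B - a t / q t)"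
proof -
  have "1 / real \<tau> * (\<Sum>t<\<tau>. B - a t / q t) = 1 / real \<tau> * (real \<tau> * B - (\<Sum>t<\<tau>. a t / q t))"
    by (simp add: sum_subtractf)
  also have "\<dots> = B - (\<Sum>t<\<tau>. a t / q t) / real \<tau>" using assms by (simp add: field_simps)
  also have "(\<Sum>t<\<tau>. a t / q t) / real \<tau> = (\<Sum>t<\<tau>. a t / (real \<tau> * q t))"
    by (simp add: sum_divide_distrib mult.commute)
  finally show ?thesis by simp
qed

lemma var_id:
  fixes a \<pi> :: "nat \<Rightarrow> real"
  assumes pos: "\<forall>i<n. \<pi> i > 0" and sum1: "(\<Sum>i<n. \<pi> i) = 1"
  shows "(\<Sum>j<n. \<pi> j * ((\<Sum>j'<n. a j') - a j / \<pi> j)^2) = (\<Sum>j<n. (a j)^2 / \<pi> j) - (\<Sum>j'<n. a j')^2"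
proof -
  define B where "B = (\<Sum>j'<n. a j')"
  have "(\<Sum>j<n. \<pi> j * (B - a j / \<pi> j)^2) = (\<Sum>j<n. \<pi> j * B^2 - 2 * B * a j + (a j)^2 / \<pi> j)"
  proof (rule sum.cong[OF refl])
    fix j assume "j \<in> {..<n}"
    then have "\<pi> j \<noteq> 0" using pos by auto
    then show "\<pi> j * (B - a j / \<pi> j)^2 = \<pi> j * B^2 - 2 * B * a j + (a j)^2 / \<pi> j"
      by (simp add: power2_eq_square field_simps)
  qed
  also have "\<dots> = (\<Sum>j<n. \<pi> j) * B^2 - 2 * B * B + (\<Sum>j<n. (a j)^2 / \<pi> j)"
    by (simp add: sum.distrib sum_subtractf sum_distrib_left sum_distrib_right B_def)
  also have "\<dots> = (\<Sum>j<n. (a j)^2 / \<pi> j) - B^2" using sum1 by (simp add: power2_eq_square)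
  finally show ?thesis unfolding B_def .
qed

lemma sq_sum:
  fixes v :: "nat \<Rightarrow> real"
  shows "(1 / real \<tau> * (\<Sum>t<\<tau>. v t))^2 = (1 / real \<tau>)^2 * (\<Sum>t<\<tau>. \<Sum>t'<\<tau>. v t * v t')"
  by (simp add: power_mult_distrib power2_eq_square sum_product)

lemma exp_cong:
  assumes "\<And>idx. idx \<in> PiE {..<\<tau>} (\<lambda>_. {..<n}) \<Longrightarrow> f idx = g idx"
  shows "samp_expect n \<tau> \<pi> f = samp_expect n \<tau> \<pi> g"
  unfolding samp_expect_def using assms by (intro sum.cong) auto

lemma swap3:
  fixes F :: "nat \<Rightarrow> nat \<Rightarrow> nat \<Rightarrow> nat \<Rightarrow> real"
  shows "(\<Sum>i<m. \<Sum>c<p. \<Sum>k<l. \<Sum>j<n. F i c k j) = (\<Sum>j<n. \<Sum>i<m. \<Sum>c<p. \<Sum>k<l. F i c k j)"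
proof -
  have "(\<Sum>i<m. \<Sum>c<p. \<Sum>k<l. \<Sum>j<n. F i c k j) = (\<Sum>i<m. \<Sum>c<p. \<Sum>j<n. \<Sum>k<l. F i c k j)"
    by (intro sum.cong refl sum.swap)
  also have "\<dots> = (\<Sum>i<m. \<Sum>j<n. \<Sum>c<p. \<Sum>k<l. F i c k j)"
    by (intro sum.cong refl sum.swap)
  also have "\<dots> = (\<Sum>j<n. \<Sum>i<m. \<Sum>c<p. \<Sum>k<l. F i c k j)"
    by (rule sum.swap)
  finally show ?thesis .
qed



theorem mainTheorem1:
  fixes m n p l \<tau> :: nat and X Y :: tensor and \<pi> :: "nat \<Rightarrow> real" and \<beta> :: real
  assumes l_pos: "l \<ge> 1"
    and tau_pos: "\<tau> \<ge> 1"
    and pi_pos: "\<forall>i<n. \<pi> i > 0"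
    and pi_sum: "(\<Sum>i<n. \<pi> i) = 1"
    and beta: "0 < \<beta>" "\<beta> \<le> 1"
    and prob_cond:
      "(\<forall>i<n. \<pi> i \<ge> \<beta> * (fro m 1 l (lat_slice X i) * fro 1 p l (hor_slice Y i))
                     / (\<Sum>j<n. fro m 1 l (lat_slice X j) * fro 1 p l (hor_slice Y j)))
       \<or> (\<forall>i<n. \<pi> i \<ge> \<beta> * (fro m 1 l (lat_slice X i))^2 / (fro m n l X)^2)"
  shows "samp_expect n \<tau> \<pi>
           (\<lambda>idx. (fro m p l
              (\<lambda>i j k. tprod l n X Y i j k
                 - tprod l n
                     (tprod l \<tau>
                        (tprod l \<tau> (tprod l \<tau> (tprod l n X (samp_S idx)) (samp_D \<tau> \<pi> idx))
                           (samp_D \<tau> \<pi> idx))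
                        (ttrans l (samp_S idx)))
                     Y i j k))^2)
         \<le> real l / (\<beta> * real \<tau>) * (fro m n l X)^2 * (fro n p l Y)^2"
  proof -
  define A where "A j i c k = (\<Sum>s<l. X i j ((k + l - s) mod l) * Y j c s)" for j i c k
  define B where "B i c k = (\<Sum>j<n. A j i c k)" for i c k
  define V where "V j i c k = B i c k - A j i c k / \<pi> j" for j i c k
  define Fx where "Fx j = fro_sq m 1 l (lat_slice X j)" for j
  define Fy where "Fy j = fro_sq 1 p l (hor_slice Y j)" for j
  define Q where "Q i c k = (\<Sum>j<n. \<pi> j * (V j i c k)^2)" for i c k
  have l0: "l > 0" using l_pos by simp
  have fsq: "(fro a b l Z)^2 = fro_sq a b l Z" for a b Z
    unfolding fro_def fro_sq_def by (simp add: sum_nonneg)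
  have stepa: "(fro m p l
              (\<lambda>i j k. tprod l n X Y i j k
                 - tprod l n
                     (tprod l \<tau>
                        (tprod l \<tau> (tprod l \<tau> (tprod l n X (samp_S idx)) (samp_D \<tau> \<pi> idx))
                           (samp_D \<tau> \<pi> idx))
                        (ttrans l (samp_S idx)))
                     Y i j k))^2
     = (\<Sum>i<m. \<Sum>c<p. \<Sum>k<l. (1 / real \<tau>)^2 * (\<Sum>t<\<tau>. \<Sum>t'<\<tau>. V (idx t) i c k * V (idx t') i c k))"
    if idx: "idx \<in> PiE {..<\<tau>} (\<lambda>_. {..<n})" for idx
  proof -
    have idx': "\<forall>t<\<tau>. idx t < n" using idx by (auto simp: PiE_iff)
    show ?thesis unfolding fsq fro_sq_def
    proof (intro sum.cong refl)
      fix i c k assume k: "k \<in> {..<l}"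
      have "tprod l n X Y i c k = B i c k" unfolding tprod_def B_def A_def by simp
      then have "tprod l n X Y i c k
                 - tprod l n
                     (tprod l \<tau>
                        (tprod l \<tau> (tprod l \<tau> (tprod l n X (samp_S idx)) (samp_D \<tau> \<pi> idx))
                           (samp_D \<tau> \<pi> idx))
                        (ttrans l (samp_S idx)))
                     Y i c k = B i c k - (\<Sum>t<\<tau>. A (idx t) i c k / (real \<tau> * \<pi> (idx t)))"
        using k idx' pi_pos by (simp add: big_eq A_def)
      also have "\<dots> = 1 / real \<tau> * (\<Sum>t<\<tau>. V (idx t) i c k)"
        unfolding V_def using tau_pos by (rule avg_id)
      finally show "(tprod l n X Y i c k
                 - tprod l n
                     (tprod l \<tau>
                        (tprod l \<tau> (tprod l \<tau> (tprod l n X (samp_S idx)) (samp_D \<tau> \<pi> idx))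
                           (samp_D \<tau> \<pi> idx))
                        (ttrans l (samp_S idx)))
                     Y i c k)^2 = (1 / real \<tau>)^2 * (\<Sum>t<\<tau>. \<Sum>t'<\<tau>. V (idx t) i c k * V (idx t') i c k)"
        using sq_sum[of \<tau> "\<lambda>t. V (idx t) i c k"] by simp
    qed
  qed
  have V0: "(\<Sum>j<n. \<pi> j * V j i c k) = 0" for i c k
  proof -
    have "(\<Sum>j<n. \<pi> j * V j i c k) = (\<Sum>j<n. \<pi> j * B i c k - A j i c k)"
      unfolding V_def using pi_pos by (intro sum.cong refl) (auto simp: field_simps)
    also have "\<dots> = 0" using pi_sum by (simp add: sum_subtractf sum_distrib_right[symmetric] B_def)
    finally show ?thesis .
  qed
  have pair: "samp_expect n \<tau> \<pi> (\<lambda>idx. V (idx t) i c k * V (idx t') i c k)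
      = (if t = t' then Q i c k else 0)" if "t < \<tau>" "t' < \<tau>" for t t' i c k
  proof (cases "t = t'")
    case True
    then show ?thesis using exp_one[OF that(1) pi_sum, of "\<lambda>j. V j i c k * V j i c k"]
      unfolding Q_def by (simp add: power2_eq_square)
  next
    case False
    then show ?thesis using exp_two[OF that False pi_sum, of "\<lambda>j. V j i c k" "\<lambda>j. V j i c k"] V0
      by simp
  qed
  have "samp_expect n \<tau> \<pi>
           (\<lambda>idx. (fro m p l
              (\<lambda>i j k. tprod l n X Y i j k
                 - tprod l n
                     (tprod l \<tau>
                        (tprod l \<tau> (tprod l \<tau> (tprod l n X (samp_S idx)) (samp_D \<tau> \<pi> idx))
                           (samp_D \<tau> \<pi> idx))
                        (ttrans l (samp_S idx)))
                     Y i j k))^2)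
     = samp_expect n \<tau> \<pi> (\<lambda>idx. (\<Sum>i<m. \<Sum>c<p. \<Sum>k<l. (1 / real \<tau>)^2 * (\<Sum>t<\<tau>. \<Sum>t'<\<tau>. V (idx t) i c k * V (idx t') i c k)))"
    by (rule exp_cong) (rule stepa)
  also have "\<dots> = (\<Sum>i<m. \<Sum>c<p. \<Sum>k<l. (1 / real \<tau>)^2 * (\<Sum>t<\<tau>. \<Sum>t'<\<tau>. samp_expect n \<tau> \<pi> (\<lambda>idx. V (idx t) i c k * V (idx t') i c k)))"
    by (simp add: exp_sum exp_cmult)
  also have "\<dots> = (\<Sum>i<m. \<Sum>c<p. \<Sum>k<l. (1 / real \<tau>)^2 * (\<Sum>t<\<tau>. \<Sum>t'<\<tau>. (if t = t' then Q i c k else 0)))"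
    by (intro sum.cong refl) (simp add: pair)
  also have "\<dots> = (\<Sum>i<m. \<Sum>c<p. \<Sum>k<l. 1 / real \<tau> * Q i c k)"
    using tau_pos by (intro sum.cong refl) (simp add: power2_eq_square)
  also have "\<dots> \<le> (\<Sum>i<m. \<Sum>c<p. \<Sum>k<l. 1 / real \<tau> * (\<Sum>j<n. (A j i c k)^2 / \<pi> j))"
  proof (rule sum_mono, rule sum_mono, rule sum_mono)
    fix i c k
    have "Q i c k = (\<Sum>j<n. (A j i c k)^2 / \<pi> j) - (B i c k)^2"
      unfolding Q_def V_def B_def by (rule var_id[OF pi_pos pi_sum])
    then have "Q i c k \<le> (\<Sum>j<n. (A j i c k)^2 / \<pi> j)" by simp
    then show "1 / real \<tau> * Q i c k \<le> 1 / real \<tau> * (\<Sum>j<n. (A j i c k)^2 / \<pi> j)"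
      by (rule mult_left_mono) simp
  qed
  also have "\<dots> = 1 / real \<tau> * (\<Sum>i<m. \<Sum>c<p. \<Sum>k<l. \<Sum>j<n. (A j i c k)^2 / \<pi> j)"
    by (simp only: sum_distrib_left)
  also have "\<dots> = 1 / real \<tau> * (\<Sum>j<n. \<Sum>i<m. \<Sum>c<p. \<Sum>k<l. (A j i c k)^2 / \<pi> j)"
    by (rule arg_cong[where f="\<lambda>x. 1 / real \<tau> * x"], rule swap3)
  also have "\<dots> = 1 / real \<tau> * (\<Sum>j<n. fro_sq m p l (A j) / \<pi> j)"
    by (simp only: fro_sq_def sum_divide_distrib)
  also have "\<dots> \<le> 1 / real \<tau> * (\<Sum>j<n. real l * Fx j * Fy j / \<pi> j)"
  proof (intro mult_left_mono sum_mono divide_right_mono)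
    fix j assume "j \<in> {..<n}"
    then show "0 \<le> \<pi> j" using pi_pos by auto
    have "A j = (\<lambda>i c k. \<Sum>s<l. X i j ((k + l - s) mod l) * Y j c s)" unfolding A_def by auto
    then show "fro_sq m p l (A j) \<le> real l * Fx j * Fy j"
      unfolding Fx_def Fy_def using normA by simp
  qed simp
  also have "\<dots> = real l / real \<tau> * (\<Sum>j<n. Fx j * Fy j / \<pi> j)"
    by (simp add: sum_distrib_left mult_ac)
  also have "\<dots> \<le> real l / real \<tau> * ((\<Sum>j<n. Fx j) * (\<Sum>j<n. Fy j) / \<beta>)"
  proof (intro mult_left_mono)
    have Fx0: "\<forall>j<n. Fx j \<ge> 0" unfolding Fx_def fro_sq_def by (simp add: sum_nonneg)
    have Fy0: "\<forall>j<n. Fy j \<ge> 0" unfolding Fy_def fro_sq_def by (simp add: sum_nonneg)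
    have FX: "(fro m n l X)^2 = (\<Sum>j<n. Fx j)"
      unfolding fsq Fx_def by (rule fro_lat)
    have sx: "fro m 1 l (lat_slice X i) = sqrt (Fx i)" for i unfolding fro_def Fx_def ..
    have sy: "fro 1 p l (hor_slice Y i) = sqrt (Fy i)" for i unfolding fro_def Fy_def ..
    have sx2: "(fro m 1 l (lat_slice X i))^2 = Fx i" for i unfolding Fx_def by (rule fsq)
    from prob_cond show "(\<Sum>j<n. Fx j * Fy j / \<pi> j) \<le> (\<Sum>j<n. Fx j) * (\<Sum>j<n. Fy j) / \<beta>"
    proof
      assume h: "\<forall>i<n. \<pi> i \<ge> \<beta> * (fro m 1 l (lat_slice X i) * fro 1 p l (hor_slice Y i))
                     / (\<Sum>j<n. fro m 1 l (lat_slice X j) * fro 1 p l (hor_slice Y j))"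
      show ?thesis using bound_case1[OF Fx0 Fy0 pi_pos beta(1)] h unfolding sx sy by simp
    next
      assume h: "\<forall>i<n. \<pi> i \<ge> \<beta> * (fro m 1 l (lat_slice X i))^2 / (fro m n l X)^2"
      show ?thesis using bound_case2[OF Fx0 Fy0 pi_pos beta(1)] h unfolding sx2 FX by simp
    qed
  qed simp
  also have "\<dots> = real l / (\<beta> * real \<tau>) * (fro m n l X)^2 * (fro n p l Y)^2"
  proof -
    have FX: "(fro m n l X)^2 = (\<Sum>j<n. Fx j)"
      unfolding fsq Fx_def by (rule fro_lat)
    have FY: "(fro n p l Y)^2 = (\<Sum>j<n. Fy j)"
      unfolding fsq Fy_def by (rule fro_hor)
    show ?thesis unfolding FX FY by (simp add: mult_ac)
  qed
  finally show ?thesis .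
qed

end
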